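(* There exist constants $c>0$ and $b>1$ such that for every even $n\ge 2$ there exist a zero-one knapsack instance with $n$ items (positive integer weights $w_i$, integer profits $v_i$) and a capacity $W$ such that the number of optimal solutions with capacity $W$ is at least $c\,b^n$ (i.e. exponential in $n$), whereas with capacity $W'=W+1$ the instance has exactly one optimal solution.
   Context: For a zero-one knapsack instance with items $[n]=\{1,\dots,n\}$ and capacity $W$, for $s\subseteq[n]$ let $w(s)=\sum_{i\in s}w_i$ and $v(s)=\sum_{i\in s}v_i$. The feasible solutions are $\mathcal{S}=\{s\subseteq[n]: w(s)\le W\}$, and the optimal solutions are $\mathcal{S}^*=\{s\in\mathcal{S}: v(s)=\max_{t\in\mathcal{S}}v(t)\}$. *)

theory Defs
  imports Complex_Main
begin

definition ks_weight :: "(nat \<Rightarrow> int) \<Rightarrow> nat set \<Rightarrow> int" where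
  "ks_weight w s = (\<Sum>i\<in>s. w i)"

definition ks_value :: "(nat \<Rightarrow> int) \<Rightarrow> nat set \<Rightarrow> int" where
  "ks_value v s = (\<Sum>i\<in>s. v i)"

definition ks_feasible :: "nat \<Rightarrow> (nat \<Rightarrow> int) \<Rightarrow> int \<Rightarrow> nat set set" where
  "ks_feasible n w W = {s. s \<subseteq> {1..n} \<and> ks_weight w s \<le> W}"

definition ks_optimal :: "nat \<Rightarrow> (nat \<Rightarrow> int) \<Rightarrow> (nat \<Rightarrow> int) \<Rightarrow> int \<Rightarrow> nat set set" where
  "ks_optimal n w v W =
     {s \<in> ks_feasible n w W. \<forall>t \<in> ks_feasible n w W. ks_value v t \<le> ks_value v s}"

end

theory Submission
  imports Defs
begin

lemma binom_bound:
  fixes m :: nat assumes "m \<ge> 1"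
  shows "(2::real) ^ (m - 1) \<le> real ((2*m - 1) choose (m - 1))"
proof -
  have k: "m - 1 \<le> 2*m - 1" by simp
  have "(2::real) ^ (m - 1) \<le> (real (2*m-1) / real (m-1)) ^ (m - 1)"
  proof (cases "m = 1")
    case True then show ?thesis by simp
  next
    case False
    then have "m - 1 > 0" using assms by simp
    then have "(2::real) \<le> real (2*m-1) / real (m-1)"
      using assms by (simp add: field_simps of_nat_diff)
    then show ?thesis by (intro power_mono) auto
  qed
  also have "\<dots> \<le> real ((2*m - 1) choose (m - 1))"
    using binomial_ge_n_over_k_pow_k[OF k] by simp
  finally show ?thesis .
qed

lemma wsum:
  fixes n m :: nat and t :: "nat set"
  assumes "t \<subseteq> {1..n}"
  shows "(\<Sum>i\<in>t. (if i = n then (a::int) else 1)) = int (card (t - {n})) + (if n \<in> t then a else 0)"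
proof -
  have fin: "finite t" using assms finite_subset by blast
  show ?thesis
  proof (cases "n \<in> t")
    case True
    have "(\<Sum>i\<in>t. (if i = n then (a::int) else 1)) = a + (\<Sum>i\<in>t - {n}. (if i = n then (a::int) else 1))"
      by (subst sum.remove[OF fin True]) simp
    also have "(\<Sum>i\<in>t - {n}. (if i = n then (a::int) else 1)) = (\<Sum>i\<in>t - {n}. 1)"
      by (rule sum.cong) auto
    finally show ?thesis using True by simp
  next
    case False
    have "(\<Sum>i\<in>t. (if i = n then (a::int) else 1)) = (\<Sum>i\<in>t. 1)"
      using False by (intro sum.cong) auto
    then show ?thesis using False by simp
  qed
qed

theorem theorem4:
  shows "\<exists>(c::real) (b::real). c > 0 \<and> b > 1 \<and>
    (\<forall>n::nat. even n \<and> n \<ge> 2 \<longrightarrow>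
      (\<exists>(w::nat \<Rightarrow> int) (v::nat \<Rightarrow> int) (W::int).
         (\<forall>i\<in>{1..n}. w i > 0) \<and>
         real (card (ks_optimal n w v W)) \<ge> c * b ^ n \<and>
         card (ks_optimal n w v (W + 1)) = 1))"
proof (rule exI[of _ "1/2"], rule exI[of _ "sqrt 2"], intro conjI allI impI)
  show "(1/2::real) > 0" by simp
  show "sqrt 2 > (1::real)" by simp
  fix n :: nat assume hn: "even n \<and> n \<ge> 2"
  then obtain m where nm: "n = 2*m" by blast
  have m1: "m \<ge> 1" using hn nm by simp
  define w where "w = (\<lambda>i. if i = n then int m else 1)"
  define v where "v = (\<lambda>i. if i = n then int n else 1)"
  define W where "W = int m - 1"
  have wt: "ks_weight w t = int (card (t - {n})) + (if n \<in> t then int m else 0)" if "t \<subseteq> {1..n}" for t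
    unfolding ks_weight_def w_def using wsum[OF that] .
  have vt: "ks_value v t = int (card (t - {n})) + (if n \<in> t then int n else 0)" if "t \<subseteq> {1..n}" for t
    unfolding ks_value_def v_def using wsum[OF that] .
  show "\<exists>w v W. (\<forall>i\<in>{1..n}. w i > 0) \<and>
         real (card (ks_optimal n w v W)) \<ge> 1/2 * sqrt 2 ^ n \<and>
         card (ks_optimal n w v (W + 1)) = 1"
  proof (rule exI[of _ w], rule exI[of _ v], rule exI[of _ W], intro conjI)
    show "\<forall>i\<in>{1..n}. w i > 0" using m1 by (auto simp: w_def)
    let ?S = "{s. s \<subseteq> {1..<n} \<and> card s = m - 1}"
    have sub: "?S \<subseteq> ks_optimal n w v W"
    proof
      fix s assume s: "s \<in> ?S"
      have s1: "s \<subseteq> {1..n}" "n \<notin> s" using s by auto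
      have ws: "ks_weight w s = int m - 1" using wt[OF s1(1)] s1(2) s m1 by simp
      have vs: "ks_value v s = int m - 1" using vt[OF s1(1)] s1(2) s m1 by simp
      have feas: "s \<in> ks_feasible n w W" using s1 ws by (simp add: ks_feasible_def W_def)
      have "ks_value v t \<le> ks_value v s" if t: "t \<in> ks_feasible n w W" for t
      proof -
        have t1: "t \<subseteq> {1..n}" and t2: "ks_weight w t \<le> W" using t by (auto simp: ks_feasible_def)
        have "n \<notin> t" using t2 wt[OF t1] by (auto simp: W_def split: if_splits)
        then show ?thesis using wt[OF t1] vt[OF t1] t2 vs by (simp add: W_def)
      qed
      then show "s \<in> ks_optimal n w v W" using feas by (simp add: ks_optimal_def)
    qed
    have fin: "finite (ks_optimal n w v W)"
      by (rule finite_subset[of _ "Pow {1..n}"]) (auto simp: ks_optimal_def ks_feasible_def)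
    have "card ?S = (n - 1) choose (m - 1)" using n_subsets[of "{1..<n}" "m - 1"] by simp
    then have "real ((2*m - 1) choose (m - 1)) \<le> real (card (ks_optimal n w v W))"
      using card_mono[OF fin sub] nm by simp
    moreover have "1/2 * sqrt 2 ^ n = (2::real) ^ (m - 1)"
    proof -
      have "sqrt 2 ^ n = (2::real) ^ m" using nm by (simp add: power_mult)
      moreover have "(2::real) ^ m = 2 * 2 ^ (m - 1)" using m1
        by (metis One_nat_def Suc_pred less_eq_Suc_le power_Suc)
      ultimately show ?thesis by simp
    qed
    ultimately show "real (card (ks_optimal n w v W)) \<ge> 1/2 * sqrt 2 ^ n"
      using binom_bound[OF m1] by simp
    have "ks_optimal n w v (W + 1) = {{n}}"
    proof -
      have n1: "{n} \<subseteq> {1..n}" using hn by auto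
      have feas: "{n} \<in> ks_feasible n w (W+1)" using wt[OF n1] n1 by (simp add: ks_feasible_def W_def)
      have vn: "ks_value v {n} = int n" using vt[OF n1] by simp
      have bound: "ks_value v t < int n \<or> t = {n}" if t: "t \<in> ks_feasible n w (W+1)" for t
      proof (cases "n \<in> t")
        case True
        have t1: "t \<subseteq> {1..n}" and t2: "ks_weight w t \<le> W + 1" using t by (auto simp: ks_feasible_def)
        have "card (t - {n}) = 0" using wt[OF t1] t2 True by (simp add: W_def)
        moreover have "finite t" using t1 finite_subset by blast
        ultimately have "t - {n} = {}" by simp
        then show ?thesis using True by blast
      next
        case False
        have t1: "t \<subseteq> {1..n}" using t by (auto simp: ks_feasible_def)
        have "t - {n} \<subseteq> {1..<n}" using t1 by auto
        then have "card (t - {n}) \<le> n - 1" using card_mono[of "{1..<n}"] by fastforce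
        then have "card (t - {n}) < n" using hn by linarith
        then show ?thesis using vt[OF t1] False by simp
      qed
      show ?thesis
      proof
        show "{{n}} \<subseteq> ks_optimal n w v (W + 1)"
          using feas vn by (force simp: ks_optimal_def dest: bound)
        show "ks_optimal n w v (W + 1) \<subseteq> {{n}}"
        proof
          fix t assume "t \<in> ks_optimal n w v (W + 1)"
          then have "t \<in> ks_feasible n w (W+1)" "ks_value v {n} \<le> ks_value v t"
            using feas by (auto simp: ks_optimal_def)
          then show "t \<in> {{n}}" using bound vn by force
        qed
      qed
    qed
    then show "card (ks_optimal n w v (W + 1)) = 1" by simp
  qed
qed

end
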